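(* Suppose there exist a language $g\in\mathbf{E}$ and $\iota>0$ such that, for every $n$, every Boolean circuit computing $g|_n$ has size at least $2^{\iota n}$. Then for every $\gamma>0$ there exists $c\in\mathbb{N}^+$ such that, as $n\to\infty$, $$\sup\left\{\frac{|f|_{\mathcal{C}}}{|f|_{\mathcal{U}^c}}: f\in H^n,\ |f|_{\mathcal{U}^c}<+\infty\right\}\in\Omega(n^{1+\gamma}).$$
   Context: Let $\mathcal{B}=\{0,1\}$, let $\mathcal{B}^*$ be the set of finite binary strings and $|h|$ the length of $h\in\mathcal{B}^*$. For $n\in\mathbb{N}^+$, $H^n$ is the set of all functions $\mathcal{B}^n\to\mathcal{B}$. An interpreter is a Turing machine computing a partial function $\varphi:\mathcal{B}^*\times\mathcal{B}^*\to\mathcal{B}\cup\{\bot\}$, where $\bot$ denotes non-halting (or invalid) output. For $f\in H^n$, $|f|_\varphi=\min\{|h|:\varphi(h,x)=f(x)\ \forall x\in\mathcal{B}^n\}$ ($+\infty$ if no such $h$). Turing machines have alphabet $\{0,1,b\}$ ($b$ blank), a finite state set containing an initial state and two final states accept/reject; the output is $1$ if halting in accept, $0$ if halting in reject, $\bot$ otherwise; multi-tape machines have read-only input tapes and read/write work tapes, and the transition function is a finite list of rules. $E(T)$ is a fixed prefix-free binary encoding of a machine $T$ listing its rules (of length at least 2 for every machine). For $c\in\mathbb{N}^+$, $\mathcal{U}^c$ is a time-bounded universal interpreter (a 2-input-tape, 3-work-tape machine): on $(p,x)$ with $n=|x|$, it checks within $n^c$ steps whether $p=E(T)u$ for a two-input-tape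 machine $T$ and $u\in\mathcal{B}^*$ (outputting $\bot$ if not, or if the check does not finish), then simulates $T$ on $(u,x)$ with an efficient universal simulation (Hennie–Stearns, overhead $O(t\log t)$ for $t$ simulated steps), devoting at most $n^c$ of its own steps to the simulation; it outputs $T$'s output if $T$ halts within this budget and $0$ otherwise. For fixed $p$ it runs in at most $\beta n^c$ steps for a constant $\beta$. In particular, if a Turing machine computes $g:\mathcal{B}^*\to\mathcal{B}$ in time $O(n^{c'})$ with $c'<c$, there is $h\in\mathcal{B}^*$ with $\mathcal{U}^c(h,x)=g(x)$ for all $x$ of sufficiently large length. A Boolean circuit on $n$ inputs is a DAG with a unique sink (output) whose sources are labelled by input indices in $\{1,\dots,n\}$ and whose other vertices (gates) are labelled AND, OR (two incoming edges) or NOT (one incoming edge); its size $|C|$ is its number of vertices. The circuit interpreter $\mathcal{C}$ reads a program $h=0^{\lceil\log_2 n\rceil}1\,[\text{binary expansion of } n]\,0^{|C|}1\,[\text{description of vertex } i]_{i=1}^{|C|}$, each vertex being described by its label and its parents/input index using $\max\{2\lceil\log_2|C|\rceil,\lceil\log_2 n\rceil\}$ bits beyond the label bits, so a circuit $C$ on $n$ inputs has encoding length $L(|C|,n)=2\lceil\log_2 n\rceil+2+|C|(3+\max\{2\lceil\log_2|C|\rceil,\lceil\log_2 n\rceil\})$; $\mathcal{C}(h,x)$ is the circuit's output on $x\in\mathcal{B}^n$, and $\bot$ if $h$ is malformed. Hence $|f|_{\mathcal{C}}=\min\{L(|C|,n): C \text{ computes } f\}$. A language is a subset $L\subseteq\mathcal{B}^*$,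 identified with its indicator function; $L|_n\in H^n$ is its restriction to inputs of length $n$. $\mathbf{E}$ is the class of languages decidable by a deterministic Turing machine in time $2^{O(n)}$. *)

theory Defs
  imports Complex_Main "HOL-Library.Extended_Nat" "HOL-Library.Landau_Symbols"
begin

datatype sym = S0 | S1 | Blank

datatype move = MvL | MvR | MvS

fun mv :: "move \<Rightarrow> int \<Rightarrow> int" where
  "mv MvL h = h - 1" | "mv MvR h = h + 1" | "mv MvS h = h"

text \<open>A rule (q, read, q', write, moves): in state q reading the symbols 'read' under the
  heads of the input tapes followed by the work tapes, go to q', write 'write' on the work
  tapes and move all heads according to 'moves'.\<close>
type_synonym rule = "nat \<times> sym list \<times> nat \<times> sym list \<times> move list"

record tm =
  nin :: nat
  nwk :: nat
  q0 :: nat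
  qacc :: nat
  qrej :: nat
  rules :: "rule list"

record conf =
  cst :: nat
  ihs :: "int list"
  wts :: "(int \<Rightarrow> sym) list"
  whs :: "int list"

definition inp_sym :: "bool list \<Rightarrow> int \<Rightarrow> sym" where
  "inp_sym w i = (if 0 \<le> i \<and> i < int (length w) then (if w ! nat i then S1 else S0) else Blank)"

definition reads :: "bool list list \<Rightarrow> conf \<Rightarrow> sym list" where
  "reads ins c = map2 inp_sym ins (ihs c) @ map2 (\<lambda>t h. t h) (wts c) (whs c)"

definition step :: "tm \<Rightarrow> bool list list \<Rightarrow> conf \<Rightarrow> conf" where
  "step M ins c =
    (if cst c = qacc M \<or> cst c = qrej M then c else
     (case find (\<lambda>(q, rd, _, _, _). q = cst c \<and> rd = reads ins c) (rules M) of
        None \<Rightarrow> c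
      | Some (_, _, q', wr, mvs) \<Rightarrow>
          \<lparr> cst = q',
            ihs = map2 mv (take (nin M) mvs) (ihs c),
            wts = map (\<lambda>((t, h), s). t(h := s)) (zip (zip (wts c) (whs c)) wr),
            whs = map2 mv (drop (nin M) mvs) (whs c) \<rparr>))"

definition init_conf :: "tm \<Rightarrow> conf" where
  "init_conf M = \<lparr> cst = q0 M, ihs = replicate (nin M) 0,
                   wts = replicate (nwk M) (\<lambda>_. Blank), whs = replicate (nwk M) 0 \<rparr>"

definition run :: "tm \<Rightarrow> bool list list \<Rightarrow> nat \<Rightarrow> conf" where
  "run M ins t = (step M ins ^^ t) (init_conf M)"

definition halted :: "tm \<Rightarrow> bool list list \<Rightarrow> nat \<Rightarrow> bool" where
  "halted M ins t \<longleftrightarrow> cst (run M ins t) = qacc M \<or> cst (run M ins t) = qrej M"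

definition halt_time :: "tm \<Rightarrow> bool list list \<Rightarrow> nat" where
  "halt_time M ins = (LEAST t. halted M ins t)"

text \<open>Output: Some True = accept (1), Some False = reject (0), None = \<bottom>.\<close>
definition tm_out :: "tm \<Rightarrow> bool list list \<Rightarrow> bool option" where
  "tm_out M ins = (if \<exists>t. halted M ins t
                   then Some (cst (run M ins (halt_time M ins)) = qacc M) else None)"

definition wf_tm :: "tm \<Rightarrow> bool" where
  "wf_tm M \<longleftrightarrow> qacc M \<noteq> qrej M \<and>
     (\<forall>(q, rd, q', wr, mvs) \<in> set (rules M).
        length rd = nin M + nwk M \<and> length wr = nwk M \<and> length mvs = nin M + nwk M) \<and>
     distinct (map (\<lambda>(q, rd, _, _, _). (q, rd)) (rules M))"

definition tm2 :: "tm \<Rightarrow> bool" where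
  "tm2 T \<longleftrightarrow> wf_tm T \<and> nin T = 2"

definition in_E :: "bool list set \<Rightarrow> bool" where
  "in_E L \<longleftrightarrow> (\<exists>M K. wf_tm M \<and> nin M = 1 \<and>
      (\<forall>x. \<exists>t \<le> K * 2 ^ (K * length x). halted M [x] t \<and>
             (cst (run M [x] t) = qacc M \<longleftrightarrow> x \<in> L)))"

type_synonym interp = "bool list \<Rightarrow> bool list \<Rightarrow> bool option"

text \<open>|f|_phi for f in H^n (f only matters on inputs of length n).\<close>
definition cx :: "interp \<Rightarrow> nat \<Rightarrow> (bool list \<Rightarrow> bool) \<Rightarrow> enat" where
  "cx \<phi> n f = (INF h \<in> {h. \<forall>x. length x = n \<longrightarrow> \<phi> h x = Some (f x)}. enat (length h))"

text \<open>Vertices are listed in a topological order; parents are indices (0-based) of earlier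
  vertices; input vertices carry an index in {1..n}; the output is the last vertex.\<close>
datatype gate = Inp nat | And nat nat | Or nat nat | Not nat

fun parents :: "gate \<Rightarrow> nat set" where
  "parents (Inp j) = {}" | "parents (And a b) = {a, b}" | "parents (Or a b) = {a, b}"
| "parents (Not a) = {a}"

definition wf_circ :: "nat \<Rightarrow> gate list \<Rightarrow> bool" where
  "wf_circ n C \<longleftrightarrow> C \<noteq> [] \<and>
     (\<forall>i < length C. (case C ! i of Inp j \<Rightarrow> 1 \<le> j \<and> j \<le> n | _ \<Rightarrow> (\<forall>a \<in> parents (C ! i). a < i))) \<and>
     (\<forall>i < length C - 1. \<exists>j < length C. i \<in> parents (C ! j))"

fun gval :: "bool list \<Rightarrow> bool list \<Rightarrow> gate \<Rightarrow> bool" where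
  "gval x vs (Inp j) = x ! (j - 1)"
| "gval x vs (And a b) = (vs ! a \<and> vs ! b)"
| "gval x vs (Or a b) = (vs ! a \<or> vs ! b)"
| "gval x vs (Not a) = (\<not> vs ! a)"

definition circ_eval :: "gate list \<Rightarrow> bool list \<Rightarrow> bool" where
  "circ_eval C x = last (foldl (\<lambda>vs g. vs @ [gval x vs g]) [] C)"

definition circ_computes :: "nat \<Rightarrow> gate list \<Rightarrow> (bool list \<Rightarrow> bool) \<Rightarrow> bool" where
  "circ_computes n C f \<longleftrightarrow> wf_circ n C \<and> (\<forall>x. length x = n \<longrightarrow> circ_eval C x = f x)"

definition clog :: "nat \<Rightarrow> nat" where
  "clog k = nat \<lceil>log 2 (real k)\<rceil>"

definition Lc :: "nat \<Rightarrow> nat \<Rightarrow> nat" where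
  "Lc s n = 2 * clog n + 2 + s * (3 + max (2 * clog s) (clog n))"

definition cx_circ :: "nat \<Rightarrow> (bool list \<Rightarrow> bool) \<Rightarrow> enat" where
  "cx_circ n f = (INF C \<in> {C. circ_computes n C f}. enat (Lc (length C) n))"

text \<open>U^c is determined by: a prefix-free encoding E of two-input-tape machines;
  chk c T n = number of own steps the syntactic check of p = E(T)u needs (on inputs x of
  length n); cost c T u x t = number of own steps used to simulate t steps of T on (u,x).\<close>
definition univ :: "(tm \<Rightarrow> bool list) \<Rightarrow> (nat \<Rightarrow> tm \<Rightarrow> nat \<Rightarrow> nat)
    \<Rightarrow> (nat \<Rightarrow> tm \<Rightarrow> bool list \<Rightarrow> bool list \<Rightarrow> nat \<Rightarrow> nat) \<Rightarrow> nat \<Rightarrow> interp" where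
  "univ E chk cost c p x =
    (if \<exists>T u. tm2 T \<and> p = E T @ u then
       (let (T, u) = (THE (T, u). tm2 T \<and> p = E T @ u); n = length x in
        if chk c T n > n ^ c then None
        else if (\<exists>t. halted T [u, x] t) \<and> cost c T u x (halt_time T [u, x]) \<le> n ^ c
        then tm_out T [u, x]
        else Some False)
     else None)"

text \<open>Admissible data: E prefix-free with codewords of length at least 2; the check
  finishes within n^c steps for large n; the simulation has Hennie--Stearns overhead
  O(t log t) (constant depending on T) and costs at least one own step per simulated step.\<close>
definition admissible :: "(tm \<Rightarrow> bool list) \<Rightarrow> (nat \<Rightarrow> tm \<Rightarrow> nat \<Rightarrow> nat)
    \<Rightarrow> (nat \<Rightarrow> tm \<Rightarrow> bool list \<Rightarrow> bool list \<Rightarrow> nat \<Rightarrow> nat) \<Rightarrow> bool" where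
  "admissible E chk cost \<longleftrightarrow>
     (\<forall>T. tm2 T \<longrightarrow> length (E T) \<ge> 2) \<and>
     (\<forall>T T' v. tm2 T \<and> tm2 T' \<and> E T' = E T @ v \<longrightarrow> T = T') \<and>
     (\<forall>c T. c \<ge> 1 \<and> tm2 T \<longrightarrow> (\<forall>\<^sub>F n in sequentially. chk c T n \<le> n ^ c)) \<and>
     (\<forall>c T. tm2 T \<longrightarrow> (\<exists>K::real. \<forall>u x t.
         t \<le> cost c T u x t \<and> real (cost c T u x t) \<le> K * (real t + 1) * log 2 (real t + 2)))"

end

theory Submission
  imports Defs "HOL-Real_Asymp.Real_Asymp"
begin

fun trr :: "rule \<Rightarrow> rule list" where
  "trr (q, rd, q', wr, mvs) =
     (if hd rd = Blank then map (\<lambda>b. (q, Blank # b # tl rd, q', wr, hd mvs # mvs)) [S0, S1, Blank]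
      else [(q, S1 # rd, q', wr, hd mvs # mvs)])"

definition trT :: "tm \<Rightarrow> tm" where
  "trT M = \<lparr> nin = 2, nwk = nwk M, q0 = q0 M, qacc = qacc M, qrej = qrej M,
             rules = concat (map trr (rules M)) \<rparr>"

fun rhsT :: "rule \<Rightarrow> nat \<times> sym list \<times> move list" where
  "rhsT (q, rd, q', wr, mvs) = (q', wr, mvs)"
fun rhsM :: "rule \<Rightarrow> nat \<times> sym list \<times> move list" where
  "rhsM (q, rd, q', wr, mvs) = (q', wr, hd mvs # mvs)"

lemma find_append_gen: "find P (xs @ ys) = (case find P xs of None \<Rightarrow> find P ys | Some a \<Rightarrow> Some a)"
  by (induction xs) auto

lemma find_trr:
  assumes ok: "(sT = S1 \<and> sy = sx \<and> sx \<noteq> Blank) \<or> (sT = Blank \<and> sy = Blank)"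
    and ne: "rd \<noteq> []"
  shows "map_option rhsT (find (\<lambda>(q, rd, _, _, _). q = s \<and> rd = sT # sx # W) (trr (q, rd, q', wr, mvs)))
       = (if q = s \<and> rd = sy # W then Some (q', wr, hd mvs # mvs) else None)"
  using ok ne by (cases rd; cases sx) auto

lemma find_tr:
  assumes ok: "(sT = S1 \<and> sy = sx \<and> sx \<noteq> Blank) \<or> (sT = Blank \<and> sy = Blank)"
    and ne: "\<forall>(q, rd, q', wr, mvs) \<in> set rs. rd \<noteq> []"
  shows "map_option rhsT (find (\<lambda>(q, rd, _, _, _). q = s \<and> rd = sT # sx # W) (concat (map trr rs)))
       = map_option rhsM (find (\<lambda>(q, rd, _, _, _). q = s \<and> rd = sy # W) rs)"
  using ne
proof (induction rs)
  case Nil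
  then show ?case by simp
next
  case (Cons r rs)
  obtain q rd q' wr mvs where r: "r = (q, rd, q', wr, mvs)" by (cases r) auto
  have rdne: "rd \<noteq> []" using Cons.prems r by auto
  have IH: "map_option rhsT (find (\<lambda>(q, rd, _, _, _). q = s \<and> rd = sT # sx # W) (concat (map trr rs)))
       = map_option rhsM (find (\<lambda>(q, rd, _, _, _). q = s \<and> rd = sy # W) rs)"
    using Cons by auto
  have F: "map_option rhsT (find (\<lambda>(q, rd, _, _, _). q = s \<and> rd = sT # sx # W) (trr r))
       = (if q = s \<and> rd = sy # W then Some (q', wr, hd mvs # mvs) else None)"
    unfolding r by (rule find_trr[OF ok rdne])
  show ?case
  proof (cases "q = s \<and> rd = sy # W")
    case True
    then obtain a where "find (\<lambda>(q, rd, _, _, _). q = s \<and> rd = sT # sx # W) (trr r) = Some a"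
      "rhsT a = (q', wr, hd mvs # mvs)" using F by (auto split: option.splits if_splits)
    moreover have "find (\<lambda>(q, rd, _, _, _). q = s \<and> rd = sy # W) (r # rs) = Some r"
      using True r by simp
    ultimately show ?thesis using r by (simp add: find_append_gen del: trr.simps)
  next
    case False
    then have "find (\<lambda>(q, rd, _, _, _). q = s \<and> rd = sT # sx # W) (trr r) = None"
      using F by (auto split: option.splits if_splits)
    moreover have "find (\<lambda>(q, rd, _, _, _). q = s \<and> rd = sy # W) (r # rs) = find (\<lambda>(q, rd, _, _, _). q = s \<and> rd = sy # W) rs"
      using False r by auto
    ultimately show ?thesis using IH by (simp add: find_append_gen del: trr.simps)
  qed
qed

definition rel :: "conf \<Rightarrow> conf \<Rightarrow> bool" where
  "rel cT cM \<longleftrightarrow> cst cT = cst cM \<and> (\<exists>h. ihs cM = [h] \<and> ihs cT = [h, h]) \<and>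
     wts cT = wts cM \<and> whs cT = whs cM"

lemma inp_sym_cases:
  assumes "m \<le> length x"
  shows "(inp_sym (replicate m True) h = S1 \<and> inp_sym (take m x) h = inp_sym x h \<and> inp_sym x h \<noteq> Blank)
       \<or> (inp_sym (replicate m True) h = Blank \<and> inp_sym (take m x) h = Blank)"
proof (cases "0 \<le> h \<and> h < int m")
  case True
  then have "nat h < m" "nat h < length x" using assms by auto
  then show ?thesis using True unfolding inp_sym_def by auto
next
  case False
  then show ?thesis using assms unfolding inp_sym_def by auto
qed

lemma wf_ne:
  assumes "wf_tm M" "nin M = 1" "r \<in> set (rules M)"
  shows "fst (snd r) \<noteq> [] \<and> snd (snd (snd (snd r))) \<noteq> []"
proof -
  obtain q rd q' wr mvs where r: "r = (q, rd, q', wr, mvs)" by (cases r) auto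
  have "length rd = nin M + nwk M \<and> length mvs = nin M + nwk M"
    using assms(1,3) unfolding wf_tm_def r by fastforce
  then show ?thesis using assms(2) r by auto
qed

lemma step_halt: "cst c = qacc M \<or> cst c = qrej M \<Longrightarrow> step M ins c = c"
  unfolding step_def by simp

lemma step_none: "find (\<lambda>(q, rd, _, _, _). q = cst c \<and> rd = reads ins c) (rules M) = None \<Longrightarrow> step M ins c = c"
  unfolding step_def by simp

lemma step_some: "\<not> (cst c = qacc M \<or> cst c = qrej M) \<Longrightarrow>
   find (\<lambda>(q, rd, _, _, _). q = cst c \<and> rd = reads ins c) (rules M) = Some (a, b, q', wr, mvs) \<Longrightarrow>
   step M ins c = \<lparr> cst = q',
            ihs = map2 mv (take (nin M) mvs) (ihs c),
            wts = map (\<lambda>((t, h), s). t(h := s)) (zip (zip (wts c) (whs c)) wr),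
            whs = map2 mv (drop (nin M) mvs) (whs c) \<rparr>"
  unfolding step_def by simp

lemma step_rel:
  assumes wf: "wf_tm M" and n1: "nin M = 1" and mx: "m \<le> length x"
    and R: "rel cT cM"
  shows "rel (step (trT M) [replicate m True, x] cT) (step M [take m x] cM)"
proof -
  obtain h where h: "ihs cM = [h]" "ihs cT = [h, h]" using R unfolding rel_def by auto
  define W where "W = map2 (\<lambda>t h. t h) (wts cM) (whs cM)"
  have ww: "wts cT = wts cM" "whs cT = whs cM" and cs: "cst cT = cst cM" using R unfolding rel_def by auto
  have rT: "reads [replicate m True, x] cT = inp_sym (replicate m True) h # inp_sym x h # W"
    by (simp add: reads_def h ww W_def)
  have rM: "reads [take m x] cM = inp_sym (take m x) h # W"
    by (simp add: reads_def h W_def)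
  have ne: "\<forall>(q, rd, q', wr, mvs) \<in> set (rules M). rd \<noteq> []"
    using wf_ne[OF wf n1] by fastforce
  have FT: "map_option rhsT (find (\<lambda>(q, rd, _, _, _). q = cst cT \<and> rd = reads [replicate m True, x] cT) (rules (trT M)))
       = map_option rhsM (find (\<lambda>(q, rd, _, _, _). q = cst cM \<and> rd = reads [take m x] cM) (rules M))"
  proof -
    have rr: "rules (trT M) = concat (map trr (rules M))" by (simp add: trT_def)
    show ?thesis unfolding rT rM rr cs by (rule find_tr[OF inp_sym_cases[OF mx] ne])
  qed
  show ?thesis
  proof (cases "cst cM = qacc M \<or> cst cM = qrej M")
    case True
    then have "cst cT = qacc (trT M) \<or> cst cT = qrej (trT M)" using R unfolding rel_def trT_def by simp
    then have "step (trT M) [replicate m True, x] cT = cT" by (rule step_halt)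
    moreover have "step M [take m x] cM = cM" using True by (rule step_halt)
    ultimately show ?thesis using R by simp
  next
    case nh: False
    show ?thesis
    proof (cases "find (\<lambda>(q, rd, _, _, _). q = cst cM \<and> rd = reads [take m x] cM) (rules M)")
      case None
      then have "find (\<lambda>(q, rd, _, _, _). q = cst cT \<and> rd = reads [replicate m True, x] cT) (rules (trT M)) = None"
        using FT by simp
      then have "step (trT M) [replicate m True, x] cT = cT" by (rule step_none)
      moreover have "step M [take m x] cM = cM" using None by (rule step_none)
      ultimately show ?thesis using R by simp
    next
      case (Some r)
      obtain a2 b2 q2 wr2 mvs2 where r: "r = (a2, b2, q2, wr2, mvs2)" by (cases r) auto
      have rin: "r \<in> set (rules M)" 
      proof -
        from Some obtain i where "i < length (rules M)" "r = rules M ! i" by (auto simp: find_Some_iff)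
        then show ?thesis by simp
      qed
      have mne: "mvs2 \<noteq> []" using wf_ne[OF wf n1 rin] r by simp
      obtain r' where S': "find (\<lambda>(q, rd, _, _, _). q = cst cT \<and> rd = reads [replicate m True, x] cT) (rules (trT M)) = Some r'"
        and rr: "rhsT r' = rhsM r"
      proof -
        have "map_option rhsT (find (\<lambda>(q, rd, _, _, _). q = cst cT \<and> rd = reads [replicate m True, x] cT) (rules (trT M))) = Some (rhsM r)"
          using FT Some by simp
        then show ?thesis using that unfolding map_option_eq_Some by blast
      qed
      obtain a b q' wr mvs where r': "r' = (a, b, q', wr, mvs)" by (cases r') auto
      have eqs: "q' = q2" "wr = wr2" "mvs = hd mvs2 # mvs2" using rr r r' by auto
      obtain mv0 ms where ms: "mvs2 = mv0 # ms" using mne by (cases mvs2) auto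
      have "cst cT = cst cM" using R unfolding rel_def by simp
      then have nhT: "\<not> (cst cT = qacc (trT M) \<or> cst cT = qrej (trT M))" using nh unfolding trT_def by simp
      have s1: "step M [take m x] cM = \<lparr> cst = q2,
            ihs = [mv mv0 h],
            wts = map (\<lambda>((t, h), s). t(h := s)) (zip (zip (wts cM) (whs cM)) wr2),
            whs = map2 mv ms (whs cM) \<rparr>"
        using step_some[OF nh Some[unfolded r]] n1 h ms by simp
      have s2: "step (trT M) [replicate m True, x] cT = \<lparr> cst = q2,
            ihs = [mv mv0 h, mv mv0 h],
            wts = map (\<lambda>((t, h), s). t(h := s)) (zip (zip (wts cT) (whs cT)) wr2),
            whs = map2 mv ms (whs cT) \<rparr>"
        using step_some[OF nhT S'[unfolded r']] h eqs ms by (simp add: trT_def)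
      show ?thesis unfolding s1 s2 using R unfolding rel_def by simp
    qed
  qed
qed

lemma run_rel:
  assumes wf: "wf_tm M" and n1: "nin M = 1" and mx: "m \<le> length x"
  shows "rel (run (trT M) [replicate m True, x] t) (run M [take m x] t)"
proof (induction t)
  case 0
  then show ?case using n1 unfolding run_def init_conf_def rel_def trT_def by (simp add: numeral_2_eq_2)
next
  case (Suc t)
  then show ?case using step_rel[OF wf n1 mx] unfolding run_def by simp
qed

definition lhs :: "rule \<Rightarrow> nat \<times> sym list" where "lhs r = (fst r, fst (snd r))"

lemma lhs_eq: "(\<lambda>(q, rd, _, _, _). (q, rd)) = lhs"
  by (rule ext) (auto simp: lhs_def split: prod.split)

lemma trr_lhs_inj:
  assumes "fst (snd r1) \<noteq> []" "fst (snd r2) \<noteq> []" "a \<in> set (trr r1)" "b \<in> set (trr r2)" "lhs a = lhs b"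
  shows "lhs r1 = lhs r2"
proof -
  obtain q1 rd1 q1' wr1 mvs1 where r1: "r1 = (q1, rd1, q1', wr1, mvs1)" by (cases r1) auto
  obtain q2 rd2 q2' wr2 mvs2 where r2: "r2 = (q2, rd2, q2', wr2, mvs2)" by (cases r2) auto
  obtain c1 t1 where c1: "rd1 = c1 # t1" using assms(1) r1 by (cases rd1) auto
  obtain c2 t2 where c2: "rd2 = c2 # t2" using assms(2) r2 by (cases rd2) auto
  show ?thesis using assms(3-5) unfolding r1 r2 c1 c2 lhs_def
    by (auto split: if_splits)
qed

lemma trr_distinct: "fst (snd r) \<noteq> [] \<Longrightarrow> distinct (map lhs (trr r))"
  by (cases r) (auto simp: lhs_def)

lemma distinct_tr:
  assumes "\<forall>r \<in> set rs. fst (snd r) \<noteq> []" "distinct (map lhs rs)"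
  shows "distinct (map lhs (concat (map trr rs)))"
  using assms
proof (induction rs)
  case Nil
  then show ?case by simp
next
  case (Cons r rs)
  have d1: "distinct (map lhs (trr r))" using Cons.prems by (intro trr_distinct) auto
  have d2: "distinct (map lhs (concat (map trr rs)))" using Cons by auto
  have disj: "lhs a \<noteq> lhs b" if "a \<in> set (trr r)" "b \<in> set (concat (map trr rs))" for a b
  proof
    assume e: "lhs a = lhs b"
    from that(2) obtain r2 where r2: "r2 \<in> set rs" "b \<in> set (trr r2)" by auto
    have "lhs r = lhs r2"
      using trr_lhs_inj[of r r2 a b] that(1) r2 e Cons.prems by auto
    then show False using Cons.prems r2(1) by auto
  qed
  have "set (map lhs (trr r)) \<inter> set (map lhs (concat (map trr rs))) = {}" using disj by fastforce
  then show ?case using d1 d2 by simp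
qed

lemma wf_trT:
  assumes wf: "wf_tm M" and n1: "nin M = 1"
  shows "tm2 (trT M)"
proof -
  have ne: "\<forall>r \<in> set (rules M). fst (snd r) \<noteq> []" using wf_ne[OF wf n1] by blast
  have dM: "distinct (map lhs (rules M))"
    using wf unfolding wf_tm_def lhs_eq by simp
  have lens: "length rd = 2 + nwk M \<and> length wr = nwk M \<and> length mvs = 2 + nwk M"
    if "(q, rd, q', wr, mvs) \<in> set (concat (map trr (rules M)))" for q rd q' wr mvs
  proof -
    from that obtain r where r: "r \<in> set (rules M)" "(q, rd, q', wr, mvs) \<in> set (trr r)" by auto
    obtain q1 rd1 q1' wr1 mvs1 where r1: "r = (q1, rd1, q1', wr1, mvs1)" by (cases r) auto
    have L: "length rd1 = 1 + nwk M \<and> length wr1 = nwk M \<and> length mvs1 = 1 + nwk M"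
      using wf r(1) n1 unfolding wf_tm_def r1 by fastforce
    then obtain c1 t1 where c1: "rd1 = c1 # t1" by (cases rd1) auto
    show ?thesis using r(2) L unfolding r1 c1 by (auto split: if_splits)
  qed
  have "distinct (map lhs (concat (map trr (rules M))))" by (rule distinct_tr[OF ne dM])
  then have D: "distinct (map (\<lambda>(q, rd, _, _, _). (q, rd)) (concat (map trr (rules M))))"
    unfolding lhs_eq by simp
  have L2: "\<forall>(q, rd, q', wr, mvs) \<in> set (concat (map trr (rules M))). length rd = nin (trT M) + nwk (trT M) \<and> length wr = nwk (trT M) \<and> length mvs = nin (trT M) + nwk (trT M)"
  proof (intro ballI, clarify)
    fix q rd q' wr mvs assume "(q, rd, q', wr, mvs) \<in> set (concat (map trr (rules M)))"
    from lens[OF this] show "length rd = nin (trT M) + nwk (trT M) \<and> length wr = nwk (trT M) \<and> length mvs = nin (trT M) + nwk (trT M)"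
      by (simp add: trT_def)
  qed
  have "qacc (trT M) \<noteq> qrej (trT M)" using wf by (simp add: trT_def wf_tm_def)
  moreover have "rules (trT M) = concat (map trr (rules M))" "nin (trT M) = 2" by (simp_all add: trT_def)
  ultimately show ?thesis unfolding tm2_def wf_tm_def using D L2 by simp
qed

lemma run_Suc: "run M ins (Suc t) = step M ins (run M ins t)"
  unfolding run_def by simp

lemma halted_stable: "halted M ins t \<Longrightarrow> run M ins (t + k) = run M ins t"
proof (induction k)
  case 0
  then show ?case by simp
next
  case (Suc k)
  then have "halted M ins (t + k)" unfolding halted_def by simp
  then show ?case using Suc step_halt unfolding halted_def by (simp add: run_Suc)
qed

lemma halted_iff:
  assumes wf: "wf_tm M" and n1: "nin M = 1" and mx: "m \<le> length x"
  shows "halted (trT M) [replicate m True, x] t \<longleftrightarrow> halted M [take m x] t"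
  using run_rel[OF wf n1 mx, of t] unfolding halted_def rel_def by (simp add: trT_def)

lemma tm_out_eq:
  assumes wf: "wf_tm M" and n1: "nin M = 1" and mx: "m \<le> length x"
  shows "tm_out (trT M) [replicate m True, x] = tm_out M [take m x]"
    and "halt_time (trT M) [replicate m True, x] = halt_time M [take m x]"
proof -
  show ht: "halt_time (trT M) [replicate m True, x] = halt_time M [take m x]"
  proof -
    have "halted (trT M) [replicate m True, x] = halted M [take m x]"
      by (rule ext) (rule halted_iff[OF wf n1 mx])
    then show ?thesis unfolding halt_time_def by simp
  qed
  show "tm_out (trT M) [replicate m True, x] = tm_out M [take m x]"
  proof -
    have HF: "halted (trT M) [replicate m True, x] = halted M [take m x]"
      by (rule ext) (rule halted_iff[OF wf n1 mx])
    have c: "cst (run (trT M) [replicate m True, x] t) = cst (run M [take m x] t)" for t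
      using run_rel[OF wf n1 mx, of t] unfolding rel_def by simp
    show ?thesis unfolding tm_out_def ht HF c by (simp add: trT_def)
  qed
qed

lemma tm_out_E:
  assumes "halted M ins t0" "cst (run M ins t0) = qacc M \<longleftrightarrow> P"
  shows "tm_out M ins = Some P" "halt_time M ins \<le> t0" "halted M ins (halt_time M ins)"
proof -
  show le: "halt_time M ins \<le> t0" unfolding halt_time_def using assms(1) by (rule Least_le)
  show h: "halted M ins (halt_time M ins)" unfolding halt_time_def using assms(1) by (rule LeastI)
  have "run M ins t0 = run M ins (halt_time M ins + (t0 - halt_time M ins))" using le by simp
  also have "\<dots> = run M ins (halt_time M ins)" using h by (rule halted_stable)
  finally show "tm_out M ins = Some P" unfolding tm_out_def using assms by auto
qed


datatype fm = FI nat | FA fm fm | FO fm fm | FN fm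

fun fev :: "bool list \<Rightarrow> fm \<Rightarrow> bool" where
  "fev x (FI j) = x ! (j - 1)"
| "fev x (FA a b) = (fev x a \<and> fev x b)"
| "fev x (FO a b) = (fev x a \<or> fev x b)"
| "fev x (FN a) = (\<not> fev x a)"

fun fvars :: "fm \<Rightarrow> nat set" where
  "fvars (FI j) = {j}"
| "fvars (FA a b) = fvars a \<union> fvars b"
| "fvars (FO a b) = fvars a \<union> fvars b"
| "fvars (FN a) = fvars a"

fun flen :: "fm \<Rightarrow> nat" where
  "flen (FI j) = 1"
| "flen (FA a b) = flen a + flen b + 1"
| "flen (FO a b) = flen a + flen b + 1"
| "flen (FN a) = flen a + 1"

lemma flen_pos: "flen a \<ge> 1"
  by (cases a) auto

fun cmp :: "fm \<Rightarrow> nat \<Rightarrow> gate list" where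
  "cmp (FI j) k = [Inp j]"
| "cmp (FA a b) k = cmp a k @ cmp b (k + flen a) @ [And (k + flen a - 1) (k + flen a + flen b - 1)]"
| "cmp (FO a b) k = cmp a k @ cmp b (k + flen a) @ [Or (k + flen a - 1) (k + flen a + flen b - 1)]"
| "cmp (FN a) k = cmp a k @ [Not (k + flen a - 1)]"

lemma cmp_len[simp]: "length (cmp a k) = flen a"
  by (induction a arbitrary: k) auto

lemma cmp_ne[simp]: "cmp a k \<noteq> []"
proof
  assume "cmp a k = []"
  then have "flen a = 0" using cmp_len[of a k] by simp
  then show False using flen_pos[of a] by simp
qed

definition stp :: "bool list \<Rightarrow> bool list \<Rightarrow> gate \<Rightarrow> bool list" where
  "stp x vs g = vs @ [gval x vs g]"

lemma foldl_stp_len: "length (foldl (stp x) vs C) = length vs + length C"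
  by (induction C arbitrary: vs) (auto simp: stp_def)

lemma foldl_stp_prefix: "\<exists>ws. foldl (stp x) vs C = vs @ ws"
  by (induction C arbitrary: vs) (auto simp: stp_def, metis append.assoc)

lemma cmp_eval:
  "length vs = k \<Longrightarrow> \<exists>ws. foldl (stp x) vs (cmp a k) = vs @ ws \<and> length ws = flen a \<and> last ws = fev x a"
proof (induction a arbitrary: k vs)
  case (FI j)
  then show ?case by (simp add: stp_def)
next
  case (FA a b)
  obtain wa where wa: "foldl (stp x) vs (cmp a k) = vs @ wa" "length wa = flen a" "last wa = fev x a"
    using FA.IH(1)[OF FA.prems] by blast
  obtain wb where wb: "foldl (stp x) (vs @ wa) (cmp b (k + flen a)) = (vs @ wa) @ wb" "length wb = flen b" "last wb = fev x b"
    using FA.IH(2)[of "vs @ wa" "k + flen a"] FA.prems wa by auto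
  have la: "flen a \<ge> 1" "flen b \<ge> 1" by (rule flen_pos)+
  have ne: "wa \<noteq> []" "wb \<noteq> []" using la wa(2) wb(2) by auto
  have i1: "(vs @ wa @ wb) ! (k + flen a - 1) = last wa"
    using la wa(2) FA.prems using ne by (auto simp: nth_append last_conv_nth)
  have i2: "(vs @ wa @ wb) ! (k + flen a + flen b - 1) = last wb"
    using la wa(2) wb(2) FA.prems using ne by (auto simp: nth_append last_conv_nth)
  have "foldl (stp x) vs (cmp (FA a b) k) = stp x (vs @ wa @ wb) (And (k + flen a - 1) (k + flen a + flen b - 1))"
    using wa wb by simp
  also have "\<dots> = vs @ (wa @ wb @ [fev x a \<and> fev x b])" using i1 i2 wa wb by (simp add: stp_def)
  finally show ?case using wa wb by simp
next
  case (FO a b)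
  obtain wa where wa: "foldl (stp x) vs (cmp a k) = vs @ wa" "length wa = flen a" "last wa = fev x a"
    using FO.IH(1)[OF FO.prems] by blast
  obtain wb where wb: "foldl (stp x) (vs @ wa) (cmp b (k + flen a)) = (vs @ wa) @ wb" "length wb = flen b" "last wb = fev x b"
    using FO.IH(2)[of "vs @ wa" "k + flen a"] FO.prems wa by auto
  have la: "flen a \<ge> 1" "flen b \<ge> 1" by (rule flen_pos)+
  have ne: "wa \<noteq> []" "wb \<noteq> []" using la wa(2) wb(2) by auto
  have i1: "(vs @ wa @ wb) ! (k + flen a - 1) = last wa"
    using la wa(2) FO.prems using ne by (auto simp: nth_append last_conv_nth)
  have i2: "(vs @ wa @ wb) ! (k + flen a + flen b - 1) = last wb"
    using la wa(2) wb(2) FO.prems using ne by (auto simp: nth_append last_conv_nth)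
  have "foldl (stp x) vs (cmp (FO a b) k) = stp x (vs @ wa @ wb) (Or (k + flen a - 1) (k + flen a + flen b - 1))"
    using wa wb by simp
  also have "\<dots> = vs @ (wa @ wb @ [fev x a \<or> fev x b])" using i1 i2 wa wb by (simp add: stp_def)
  finally show ?case using wa wb by simp
next
  case (FN a)
  obtain wa where wa: "foldl (stp x) vs (cmp a k) = vs @ wa" "length wa = flen a" "last wa = fev x a"
    using FN.IH(1)[OF FN.prems] by blast
  have la: "flen a \<ge> 1" by (rule flen_pos)
  have ne: "wa \<noteq> []" using la wa(2) by auto
  have i1: "(vs @ wa) ! (k + flen a - 1) = last wa"
    using la wa(2) FN.prems using ne by (auto simp: nth_append last_conv_nth)
  have "foldl (stp x) vs (cmp (FN a) k) = stp x (vs @ wa) (Not (k + flen a - 1))"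
    using wa by simp
  also have "\<dots> = vs @ (wa @ [\<not> fev x a])" using i1 wa by (simp add: stp_def)
  finally show ?case using wa by simp
qed

definition P1 :: "nat set \<Rightarrow> nat \<Rightarrow> gate list \<Rightarrow> bool" where
  "P1 V k c \<longleftrightarrow> (\<forall>i < length c. case c ! i of Inp j \<Rightarrow> j \<in> V | g \<Rightarrow> (\<forall>p \<in> parents g. p < k + i))"

definition P2 :: "nat \<Rightarrow> gate list \<Rightarrow> bool" where
  "P2 k c \<longleftrightarrow> (\<forall>i < length c - 1. \<exists>j < length c. k + i \<in> parents (c ! j))"

lemma P1_bin:
  assumes "P1 V k ca" "P1 V (k + length ca) cb" "\<forall>p \<in> parents g. p < k + length ca + length cb" "\<not> (\<exists>j. g = Inp j)"
  shows "P1 V k (ca @ cb @ [g])"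
  unfolding P1_def
proof (intro allI impI)
  fix i assume i: "i < length (ca @ cb @ [g])"
  show "case (ca @ cb @ [g]) ! i of Inp j \<Rightarrow> j \<in> V | g \<Rightarrow> (\<forall>p \<in> parents g. p < k + i)"
  proof (cases "i < length ca")
    case True
    then show ?thesis using assms(1) unfolding P1_def by (auto simp: nth_append)
  next
    case F1: False
    show ?thesis
    proof (cases "i < length ca + length cb")
      case True
      then have "i - length ca < length cb" using F1 by auto
      then have "case cb ! (i - length ca) of Inp j \<Rightarrow> j \<in> V | g \<Rightarrow> (\<forall>p \<in> parents g. p < k + length ca + (i - length ca))"
        using assms(2) unfolding P1_def by auto
      then show ?thesis using True F1 by (auto simp: nth_append split: gate.splits)
    next
      case False
      then have "i = length ca + length cb" using i by auto
      then show ?thesis using assms(3,4) by (auto simp: nth_append split: gate.splits)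
    qed
  qed
qed

lemma P1_un:
  assumes "P1 V k ca" "\<forall>p \<in> parents g. p < k + length ca" "\<not> (\<exists>j. g = Inp j)"
  shows "P1 V k (ca @ [g])"
  using P1_bin[of V k ca "[]" g] assms by (simp add: P1_def)

lemma P2_bin:
  assumes "P2 k ca" "P2 (k + length ca) cb" "ca \<noteq> []" "cb \<noteq> []"
    "k + length ca - 1 \<in> parents g" "k + length ca + length cb - 1 \<in> parents g"
  shows "P2 k (ca @ cb @ [g])"
  unfolding P2_def
proof (intro allI impI)
  fix i assume i: "i < length (ca @ cb @ [g]) - 1"
  let ?c = "ca @ cb @ [g]"
  have last: "?c ! (length ca + length cb) = g" by (simp add: nth_append)
  show "\<exists>j < length ?c. k + i \<in> parents (?c ! j)"
  proof (cases "i < length ca - 1")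
    case True
    then obtain j where "j < length ca" "k + i \<in> parents (ca ! j)" using assms(1) unfolding P2_def by auto
    then show ?thesis by (intro exI[of _ j]) (auto simp: nth_append)
  next
    case F1: False
    show ?thesis
    proof (cases "i = length ca - 1")
      case True
      have e: "k + (length ca - 1) = k + length ca - 1" using assms(3) by (cases ca) auto
      show ?thesis using True assms(3,5) last e by (intro exI[of _ "length ca + length cb"]) auto
    next
      case F2: False
      show ?thesis
      proof (cases "i < length ca + length cb - 1")
        case True
        then have "i - length ca < length cb - 1" "i \<ge> length ca" using F1 F2 by auto
        then obtain j where j: "j < length cb" "k + length ca + (i - length ca) \<in> parents (cb ! j)"
          using assms(2) unfolding P2_def by auto
        have "?c ! (length ca + j) = cb ! j" using j(1) by (simp add: nth_append)
        then show ?thesis using j \<open>i \<ge> length ca\<close> by (intro exI[of _ "length ca + j"]) auto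
      next
        case False
        then have "i = length ca + length cb - 1" using i by auto
        moreover have "k + (length ca + length cb - 1) = k + length ca + length cb - 1" using assms(3) by (cases ca) auto
        ultimately show ?thesis using assms(3,4,6) last by (intro exI[of _ "length ca + length cb"]) auto
      qed
    qed
  qed
qed

lemma P2_un:
  assumes "P2 k ca" "ca \<noteq> []" "k + length ca - 1 \<in> parents g"
  shows "P2 k (ca @ [g])"
  unfolding P2_def
proof (intro allI impI)
  fix i assume i: "i < length (ca @ [g]) - 1"
  show "\<exists>j < length (ca @ [g]). k + i \<in> parents ((ca @ [g]) ! j)"
  proof (cases "i < length ca - 1")
    case True
    then obtain j where "j < length ca" "k + i \<in> parents (ca ! j)" using assms(1) unfolding P2_def by auto
    then show ?thesis by (intro exI[of _ j]) (auto simp: nth_append)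
  next
    case False
    then have "i = length ca - 1" using i by auto
    moreover have e: "k + (length ca - 1) = k + length ca - 1" using assms(2) by (cases ca) auto
    ultimately show ?thesis using assms(2,3) by (intro exI[of _ "length ca"]) (auto simp: nth_append)
  qed
qed

lemma cmp_wf: "P1 (fvars a) k (cmp a k) \<and> P2 k (cmp a k)"
proof (induction a arbitrary: k)
  case (FI j)
  then show ?case by (simp add: P1_def P2_def)
next
  case (FA a b)
  have la: "flen a \<ge> 1" "flen b \<ge> 1" by (rule flen_pos)+
  have "length (cmp a k) \<ge> 1" "length (cmp b (k + flen a)) \<ge> 1" using la by simp_all
  then have nes: "cmp a k \<noteq> []" "cmp b (k + flen a) \<noteq> []" by auto
  have m1: "P1 (fvars (FA a b)) k (cmp a k)" using FA.IH(1)[of k] unfolding P1_def by (auto split: gate.splits)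
  have m2: "P1 (fvars (FA a b)) (k + length (cmp a k)) (cmp b (k + flen a))" using FA.IH(2)[of "k + flen a"] unfolding P1_def by (auto split: gate.splits)
  show ?case using P1_bin[OF m1 m2] P2_bin[of k "cmp a k" "cmp b (k + flen a)"] FA.IH[of k] FA.IH(2)[of "k + flen a"] la nes
    by (auto simp del: cmp.simps simp: cmp.simps(2))
next
  case (FO a b)
  have la: "flen a \<ge> 1" "flen b \<ge> 1" by (rule flen_pos)+
  have "length (cmp a k) \<ge> 1" "length (cmp b (k + flen a)) \<ge> 1" using la by simp_all
  then have nes: "cmp a k \<noteq> []" "cmp b (k + flen a) \<noteq> []" by auto
  have m1: "P1 (fvars (FO a b)) k (cmp a k)" using FO.IH(1)[of k] unfolding P1_def by (auto split: gate.splits)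
  have m2: "P1 (fvars (FO a b)) (k + length (cmp a k)) (cmp b (k + flen a))" using FO.IH(2)[of "k + flen a"] unfolding P1_def by (auto split: gate.splits)
  show ?case using P1_bin[OF m1 m2] P2_bin[of k "cmp a k" "cmp b (k + flen a)"] FO.IH[of k] FO.IH(2)[of "k + flen a"] la nes
    by (auto simp del: cmp.simps simp: cmp.simps(3))
next
  case (FN a)
  have la: "flen a \<ge> 1" by (rule flen_pos)
  have "length (cmp a k) \<ge> 1" using la by simp
  then have nes: "cmp a k \<noteq> []" by auto
  show ?case using nes P1_un[of "fvars a" k "cmp a k"] P2_un[of k "cmp a k"] FN.IH[of k] la
    by (auto simp del: cmp.simps simp: cmp.simps(4))
qed

lemma circ_from_fm:
  assumes "fvars a \<subseteq> {1..n}" "\<forall>x. length x = n \<longrightarrow> fev x a = f x"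
  shows "circ_computes n (cmp a 0) f"
proof -
  have w: "P1 (fvars a) 0 (cmp a 0)" "P2 0 (cmp a 0)" using cmp_wf[of a 0] by auto
  have "length (cmp a 0) \<ge> 1" using flen_pos[of a] by simp
  then have ne: "cmp a 0 \<noteq> []" by auto
  have "wf_circ n (cmp a 0)"
    unfolding wf_circ_def
  proof (intro conjI ne allI impI)
    fix i assume i: "i < length (cmp a 0)"
    then show "case cmp a 0 ! i of Inp j \<Rightarrow> 1 \<le> j \<and> j \<le> n | _ \<Rightarrow> \<forall>a\<in>parents (cmp a 0 ! i). a < i"
      using w(1) assms(1) unfolding P1_def by (fastforce split: gate.splits)
  next
    fix i assume i: "i < length (cmp a 0) - 1"
    then show "\<exists>j < length (cmp a 0). i \<in> parents (cmp a 0 ! j)"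
      using w(2) unfolding P2_def by auto
  qed
  moreover have "circ_eval (cmp a 0) x = f x" if "length x = n" for x
  proof -
    obtain ws where "foldl (stp x) [] (cmp a 0) = [] @ ws" "length ws = flen a" "last ws = fev x a"
      using cmp_eval[of "[]" 0 x a] by auto
    then show ?thesis using assms(2) that unfolding circ_eval_def stp_def[abs_def] by simp
  qed
  ultimately show ?thesis unfolding circ_computes_def by auto
qed

definition ftrue :: fm where "ftrue = FO (FI 1) (FN (FI 1))"
definition ffalse :: fm where "ffalse = FA (FI 1) (FN (FI 1))"

fun eqf :: "bool list \<Rightarrow> nat \<Rightarrow> fm" where
  "eqf [] k = ftrue"
| "eqf (b # bs) k = FA (if b then FI k else FN (FI k)) (eqf bs (Suc k))"

lemma eqf_sem: "k \<ge> 1 \<Longrightarrow> fev x (eqf z k) = (\<forall>i<length z. x ! (k - 1 + i) = z ! i)"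
proof (induction z arbitrary: k)
  case Nil
  then show ?case by (simp add: ftrue_def)
next
  case (Cons b bs)
  have "fev x (eqf (b # bs) k) = ((x ! (k - 1) = b) \<and> (\<forall>i<length bs. x ! (k + i) = bs ! i))"
    using Cons.IH[of "Suc k"] Cons.prems by auto
  also have "\<dots> = (\<forall>i<length (b # bs). x ! (k - 1 + i) = (b # bs) ! i)"
    unfolding length_Cons All_less_Suc2 using Cons.prems by (simp add: add.commute)
  finally show ?case .
qed

lemma eqf_vars: "k \<ge> 1 \<Longrightarrow> fvars (eqf z k) \<subseteq> {1} \<union> {k..<k + length z}"
proof (induction z arbitrary: k)
  case Nil
  then show ?case by (auto simp: ftrue_def)
next
  case (Cons b bs)
  have "fvars (eqf bs (Suc k)) \<subseteq> {1} \<union> {Suc k..<Suc k + length bs}" using Cons.IH[of "Suc k"] by simp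
  then show ?case using Cons.prems by auto
qed

definition dnf :: "bool list list \<Rightarrow> fm" where
  "dnf zs = foldr (\<lambda>z acc. FO (eqf z 1) acc) zs ffalse"

lemma dnf_sem: "fev x (dnf zs) = (\<exists>z \<in> set zs. fev x (eqf z 1))"
  unfolding dnf_def by (induction zs) (auto simp: ffalse_def)

lemma dnf_vars: "\<forall>z\<in>set zs. length z = n \<Longrightarrow> n \<ge> 1 \<Longrightarrow> fvars (dnf zs) \<subseteq> {1..n}"
  unfolding dnf_def
proof (induction zs)
  case Nil
  then show ?case by (auto simp: ffalse_def)
next
  case (Cons z zs)
  then show ?case using eqf_vars[of 1 z] by auto
qed

lemma circ_exists:
  assumes "n \<ge> 1"
  shows "\<exists>C. circ_computes n C f"
proof -
  define zs where "zs = filter f (List.n_lists n [True, False])"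
  have zl: "\<forall>z\<in>set zs. length z = n" unfolding zs_def using length_n_lists_elem by auto
  have "fev x (dnf zs) = f x" if x: "length x = n" for x
  proof
    assume "fev x (dnf zs)"
    then obtain z where z: "z \<in> set zs" "fev x (eqf z 1)" unfolding dnf_sem by auto
    then have "\<forall>i<length z. x ! i = z ! i" using eqf_sem[of 1 x z] by simp
    then have "x = z" using zl z(1) x by (intro nth_equalityI) auto
    then show "f x" using z(1) unfolding zs_def by simp
  next
    assume "f x"
    then have "x \<in> set zs" unfolding zs_def using x by (auto simp: set_n_lists)
    moreover have "fev x (eqf x 1)" using eqf_sem[of 1 x x] by simp
    ultimately show "fev x (dnf zs)" unfolding dnf_sem by auto
  qed
  then show ?thesis using circ_from_fm[OF dnf_vars[OF zl assms]] by blast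
qed

fun rg :: "nat \<Rightarrow> gate \<Rightarrow> gate" where
  "rg m (Inp j) = Inp (if j \<le> m then j else 1)"
| "rg m g = g"

lemma parents_rg[simp]: "parents (rg m g) = parents g"
  by (cases g) auto

lemma circ_eval_stp: "circ_eval C x = last (foldl (stp x) [] C)"
  unfolding circ_eval_def stp_def[abs_def] by simp

lemma foldl_rg:
  assumes "\<forall>g\<in>set C. (case g of Inp j \<Rightarrow> 1 \<le> j \<and> j \<le> n | _ \<Rightarrow> True)"
    and "length z = m" "1 \<le> m" "m \<le> n" "x = z @ replicate (n - m) (z ! 0)"
  shows "foldl (stp z) vs (map (rg m) C) = foldl (stp x) vs C"
  using assms(1)
proof (induction C arbitrary: vs)
  case Nil
  then show ?case by simp
next
  case (Cons g C)
  have "gval z vs (rg m g) = gval x vs g"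
  proof (cases g)
    case (Inp j)
    then have j: "1 \<le> j" "j \<le> n" using Cons.prems by auto
    show ?thesis
    proof (cases "j \<le> m")
      case True
      then have "j - 1 < m" using j by auto
      then show ?thesis using Inp j True assms(2-5) by (simp add: nth_append)
    next
      case False
      then show ?thesis using Inp j assms(2-5) by (simp add: nth_append)
    qed
  qed auto
  then show ?case using Cons by (simp add: stp_def)
qed

lemma restrict_circ:
  assumes C: "circ_computes n C f" and m: "1 \<le> m" "m \<le> n"
    and fP: "\<forall>x. length x = n \<longrightarrow> f x = P (take m x)"
  shows "circ_computes m (map (rg m) C) P"
proof -
  have wf: "wf_circ n C" using C unfolding circ_computes_def by simp
  have inps: "\<forall>g\<in>set C. (case g of Inp j \<Rightarrow> 1 \<le> j \<and> j \<le> n | _ \<Rightarrow> True)"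
  proof
    fix g assume "g \<in> set C"
    then obtain i where i: "i < length C" "g = C ! i" by (auto simp: in_set_conv_nth)
    then show "case g of Inp j \<Rightarrow> 1 \<le> j \<and> j \<le> n | _ \<Rightarrow> True"
      using wf unfolding wf_circ_def by (auto split: gate.splits)
  qed
  have "wf_circ m (map (rg m) C)"
    unfolding wf_circ_def
  proof (intro conjI allI impI)
    show "map (rg m) C \<noteq> []" using wf unfolding wf_circ_def by simp
  next
    fix i assume i: "i < length (map (rg m) C)"
    then have "case C ! i of Inp j \<Rightarrow> 1 \<le> j \<and> j \<le> n | _ \<Rightarrow> (\<forall>a \<in> parents (C ! i). a < i)"
      using wf unfolding wf_circ_def by simp
    then show "case map (rg m) C ! i of Inp j \<Rightarrow> 1 \<le> j \<and> j \<le> m | _ \<Rightarrow> (\<forall>a \<in> parents (map (rg m) C ! i). a < i)"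
      using i m by (cases "C ! i") auto
  next
    fix i assume i: "i < length (map (rg m) C) - 1"
    then obtain j where "j < length C" "i \<in> parents (C ! j)" using wf unfolding wf_circ_def by auto
    then show "\<exists>j < length (map (rg m) C). i \<in> parents (map (rg m) C ! j)" by auto
  qed
  moreover have "circ_eval (map (rg m) C) z = P z" if z: "length z = m" for z
  proof -
    define x where "x = z @ replicate (n - m) (z ! 0)"
    have lx: "length x = n" using z m unfolding x_def by simp
    have "circ_eval (map (rg m) C) z = circ_eval C x"
      unfolding circ_eval_stp using foldl_rg[OF inps z m x_def] by simp
    also have "\<dots> = f x" using C lx unfolding circ_computes_def by simp
    also have "\<dots> = P (take m x)" using fP lx by simp
    also have "take m x = z" using z unfolding x_def by simp
    finally show ?thesis .
  qed
  ultimately show ?thesis unfolding circ_computes_def by simp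
qed


lemma Inf_enat_in: "A \<noteq> {} \<Longrightarrow> Inf (A::enat set) \<in> A"
  unfolding Inf_enat_def by (auto intro: LeastI)

lemma cx_bounds:
  assumes h: "\<forall>x. length x = n \<longrightarrow> \<phi> h x = Some (f x)"
    and l2: "\<forall>h'. (\<forall>x. length x = n \<longrightarrow> \<phi> h' x = Some (f x)) \<longrightarrow> length h' \<ge> 2"
  shows "cx \<phi> n f < \<infinity>" "2 \<le> the_enat (cx \<phi> n f)" "the_enat (cx \<phi> n f) \<le> length h"
proof -
  let ?S = "{h. \<forall>x. length x = n \<longrightarrow> \<phi> h x = Some (f x)}"
  have hS: "h \<in> ?S" using h by simp
  have "cx \<phi> n f \<in> (\<lambda>h. enat (length h)) ` ?S"
    unfolding cx_def using hS by (intro Inf_enat_in) auto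
  then obtain h0 where h0: "h0 \<in> ?S" "cx \<phi> n f = enat (length h0)" by auto
  have le: "cx \<phi> n f \<le> enat (length h)" unfolding cx_def using hS by (rule INF_lower)
  show "cx \<phi> n f < \<infinity>" using h0 by simp
  show "2 \<le> the_enat (cx \<phi> n f)" using h0 l2 by auto
  show "the_enat (cx \<phi> n f) \<le> length h" using h0 le by simp
qed

lemma Lc_ge: "s \<le> Lc s n"
proof -
  have "s * 1 \<le> s * (3 + max (2 * clog s) (clog n))" by (rule mult_le_mono2) simp
  then show ?thesis unfolding Lc_def by linarith
qed

lemma cxc_bound:
  assumes n: "n \<ge> 1" and lb: "\<forall>C. circ_computes n C f \<longrightarrow> L \<le> real (length C)"
  shows "L \<le> real (the_enat (cx_circ n f))"
proof -
  let ?S = "{C. circ_computes n C f}"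
  obtain C1 where "circ_computes n C1 f" using circ_exists[OF n] by blast
  then have "?S \<noteq> {}" by auto
  then have "cx_circ n f \<in> (\<lambda>C. enat (Lc (length C) n)) ` ?S"
    unfolding cx_circ_def by (intro Inf_enat_in) auto
  then obtain C0 where C0: "circ_computes n C0 f" "cx_circ n f = enat (Lc (length C0) n)" by auto
  have "L \<le> real (length C0)" using lb C0 by auto
  also have "\<dots> \<le> real (Lc (length C0) n)" using Lc_ge by simp
  finally show ?thesis using C0 by simp
qed

definition restr :: "nat \<Rightarrow> (bool list \<Rightarrow> bool) \<Rightarrow> bool list \<Rightarrow> bool" where
  "restr n f = (\<lambda>x. x \<in> {x. length x = n \<and> f x})"

lemma cx_restr: "cx \<phi> n (restr n f) = cx \<phi> n f"
  unfolding cx_def restr_def by simp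

lemma cxc_restr: "cx_circ n (restr n f) = cx_circ n f"
  unfolding cx_circ_def circ_computes_def restr_def by simp

lemma finite_restr: "finite (range (restr n))"
proof -
  have fin: "finite {xs :: bool list. length xs = n}"
    using finite_lists_length_eq[of "UNIV :: bool set" n] by simp
  have "range (restr n) \<subseteq> (\<lambda>A x. x \<in> A) ` Pow {xs :: bool list. length xs = n}"
  proof
    fix v assume "v \<in> range (restr n)"
    then obtain f where "v = restr n f" by auto
    then show "v \<in> (\<lambda>A x. x \<in> A) ` Pow {xs :: bool list. length xs = n}"
      unfolding restr_def by (intro rev_image_eqI[of "{x. length x = n \<and> f x}"]) auto
  qed
  then show ?thesis using fin by (rule finite_subset[OF _ finite_imageI[OF finite_Pow_iff[THEN iffD2]]])
qed

lemma sup_ge: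
  assumes "cx \<phi> n f0 < \<infinity>"
  shows "real (the_enat (cx_circ n f0)) / real (the_enat (cx \<phi> n f0))
       \<le> Sup ((\<lambda>f. real (the_enat (cx_circ n f)) / real (the_enat (cx \<phi> n f))) ` {f. cx \<phi> n f < \<infinity>})"
proof -
  let ?r = "\<lambda>f. real (the_enat (cx_circ n f)) / real (the_enat (cx \<phi> n f))"
  have "?r ` {f. cx \<phi> n f < \<infinity>} \<subseteq> ?r ` range (restr n)"
  proof
    fix v assume "v \<in> ?r ` {f. cx \<phi> n f < \<infinity>}"
    then obtain f where "v = ?r f" by auto
    then have "v = ?r (restr n f)" by (simp add: cx_restr cxc_restr)
    then show "v \<in> ?r ` range (restr n)" by auto
  qed
  then have "finite (?r ` {f. cx \<phi> n f < \<infinity>})"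
    using finite_restr by (meson finite_imageI finite_subset)
  then have "bdd_above (?r ` {f. cx \<phi> n f < \<infinity>})" by (rule bdd_above_finite)
  then show ?thesis using assms by (intro cSup_upper) auto
qed

lemma univ_len:
  assumes adm: "admissible E chk cost" and "univ E chk cost c h x \<noteq> None"
  shows "length h \<ge> 2"
proof -
  from assms(2) obtain T u where "tm2 T" "h = E T @ u" unfolding univ_def by (auto split: if_splits)
  then show ?thesis using adm unfolding admissible_def by fastforce
qed

lemma univ_eq:
  assumes adm: "admissible E chk cost" and T: "tm2 T"
    and chk: "chk c T (length x) \<le> length x ^ c"
    and hlt: "\<exists>t. halted T [u, x] t"
    and cst: "cost c T u x (halt_time T [u, x]) \<le> length x ^ c"
  shows "univ E chk cost c (E T @ u) x = tm_out T [u, x]"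
proof -
  have pf: "\<forall>T T' v. tm2 T \<and> tm2 T' \<and> E T' = E T @ v \<longrightarrow> T = T'"
    using adm unfolding admissible_def by blast
  have uniq: "(T', u') = (T, u)" if "tm2 T' \<and> E T @ u = E T' @ u'" for T' u'
  proof -
    from that obtain us where "(E T = E T' @ us \<and> us @ u = u') \<or> (E T @ us = E T' \<and> u = us @ u')"
      by (auto simp: append_eq_append_conv2)
    then have "T' = T" using pf T that by metis
    then show ?thesis using that by simp
  qed
  have th: "(THE (T', u'). tm2 T' \<and> E T @ u = E T' @ u') = (T, u)"
    by (rule the_equality) (use T uniq in auto)
  show ?thesis unfolding univ_def using T th chk hlt cst by auto
qed


lemma evlog: "eventually (\<lambda>n::nat. A + B * log 2 (real n) \<le> real n) sequentially"
proof -
  have "eventually (\<lambda>x::real. A + B * log 2 x \<le> x) at_top" by real_asymp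
  then show ?thesis by (rule eventually_compose_filterlim[OF _ filterlim_real_sequentially])
qed

lemma pow_bound:
  fixes K m :: nat and a N :: real
  assumes N: "N \<ge> 1" and m: "real m \<le> a * log 2 N + 1"
  shows "real (2 ^ (K * m)) \<le> 2 ^ K * N powr (real K * a)"
proof -
  have "real (2 ^ (K * m)) = 2 powr (real K * real m)"
    by (simp add: powr_realpow[symmetric])
  also have "\<dots> \<le> 2 powr (real K * (a * log 2 N + 1))"
    using m by (intro powr_mono mult_left_mono) auto
  also have "\<dots> = 2 powr real K * (2 powr (log 2 N)) powr (real K * a)"
    by (simp add: powr_add powr_powr algebra_simps)
  also have "\<dots> = 2 ^ K * N powr (real K * a)"
    using N by (simp add: powr_realpow)
  finally show ?thesis .
qed

lemma cost_bound:
  fixes N K' e cst c :: real and ht t0 K :: nat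
  assumes N: "N \<ge> 1" and e: "e \<ge> 0" and K': "K' \<ge> 0"
    and t0: "real t0 \<le> real K * 2 ^ K * N powr e" and ht: "ht \<le> t0"
    and ev: "K' * (real K * 2 ^ K + 2) * log 2 (real K * 2 ^ K + 2) + K' * (real K * 2 ^ K + 2) * e * log 2 N \<le> N"
    and c: "c \<ge> e + 1"
    and cst: "cst \<le> K' * (real ht + 1) * log 2 (real ht + 2)"
  shows "cst \<le> N powr c"
proof -
  define B :: real where "B = real K * 2 ^ K + 2"
  have B: "B \<ge> 2" unfolding B_def by simp
  have Ne: "N powr e \<ge> 1" using N e by (simp add: ge_one_powr_ge_zero)
  have "real ht + 2 \<le> real K * 2 ^ K * N powr e + 2" using t0 ht by linarith
  also have "\<dots> \<le> B * N powr e" unfolding B_def using Ne by (simp add: algebra_simps)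
  finally have Y: "real ht + 2 \<le> B * N powr e" .
  have Y1: "real ht + 1 \<le> B * N powr e" using Y by linarith
  have "log 2 (real ht + 2) \<le> log 2 (B * N powr e)"
    using Y by (subst log_le_cancel_iff) auto
  also have "\<dots> = log 2 B + e * log 2 N"
    using B N by (simp add: log_mult log_powr)
  finally have L: "log 2 (real ht + 2) \<le> log 2 B + e * log 2 N" .
  have L0: "0 \<le> log 2 (real ht + 2)" by simp
  have "cst \<le> K' * (real ht + 1) * log 2 (real ht + 2)" by (rule cst)
  also have "\<dots> \<le> K' * (B * N powr e) * (log 2 B + e * log 2 N)"
    using Y1 L L0 K' by (intro mult_mono) (auto intro: mult_left_mono)
  also have "\<dots> = N powr e * (K' * B * log 2 B + K' * B * e * log 2 N)"
    by (simp add: algebra_simps)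
  also have "\<dots> \<le> N powr e * N" using ev Ne unfolding B_def by (intro mult_left_mono) auto
  also have "\<dots> = N powr (e + 1)" using N by (simp add: powr_add)
  also have "\<dots> \<le> N powr c" using N c by (intro powr_mono) auto
  finally show ?thesis .
qed

lemma circ_pow:
  fixes \<iota> \<gamma> N :: real and m :: nat
  assumes \<iota>: "\<iota> > 0" and N: "N \<ge> 1" and m: "real m \<ge> (2 + \<gamma>) / \<iota> * log 2 N"
  shows "N powr (2 + \<gamma>) \<le> 2 powr (\<iota> * real m)"
proof -
  have "N powr (2 + \<gamma>) = (2 powr (log 2 N)) powr (2 + \<gamma>)" using N by simp
  also have "\<dots> = 2 powr ((2 + \<gamma>) * log 2 N)" by (simp add: powr_powr algebra_simps)
  also have "\<dots> \<le> 2 powr (\<iota> * real m)"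
  proof (intro powr_mono)
    have "\<iota> * ((2 + \<gamma>) / \<iota> * log 2 N) \<le> \<iota> * real m" using m \<iota> by (intro mult_left_mono) auto
    moreover have "\<iota> * ((2 + \<gamma>) / \<iota> * log 2 N) = (2 + \<gamma>) * log 2 N" using \<iota> by simp
    ultimately show "(2 + \<gamma>) * log 2 N \<le> \<iota> * real m" by linarith
  qed auto
  finally show ?thesis .
qed


theorem mainTheorem15:
  fixes E :: "tm \<Rightarrow> bool list"
    and chk :: "nat \<Rightarrow> tm \<Rightarrow> nat \<Rightarrow> nat"
    and cost :: "nat \<Rightarrow> tm \<Rightarrow> bool list \<Rightarrow> bool list \<Rightarrow> nat \<Rightarrow> nat"
  assumes adm: "admissible E chk cost"
    and hard: "\<exists>g \<iota>. in_E g \<and> \<iota> > (0::real) \<and>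
                 (\<forall>n \<ge> 1. \<forall>C. circ_computes n C (\<lambda>x. x \<in> g) \<longrightarrow> 2 powr (\<iota> * real n) \<le> real (length C))"
  shows "\<forall>\<gamma> > (0::real). \<exists>c::nat. c \<ge> 1 \<and>
           (\<lambda>n::nat. Sup ((\<lambda>f. real (the_enat (cx_circ n f)) / real (the_enat (cx (univ E chk cost c) n f)))
                            ` {f. cx (univ E chk cost c) n f < \<infinity>}))
           \<in> \<Omega>(\<lambda>n. real n powr (1 + \<gamma>))"
proof (intro allI impI)
  fix \<gamma> :: real assume \<gamma>: "\<gamma> > 0"
  obtain g \<iota> where gE: "in_E g" and \<iota>: "\<iota> > 0"
    and hardg: "\<forall>n \<ge> 1. \<forall>C. circ_computes n C (\<lambda>x. x \<in> g) \<longrightarrow> 2 powr (\<iota> * real n) \<le> real (length C)"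
    using hard by blast
  obtain M K where M: "wf_tm M" "nin M = 1"
    and MK: "\<forall>x. \<exists>t \<le> K * 2 ^ (K * length x). halted M [x] t \<and> (cst (run M [x] t) = qacc M \<longleftrightarrow> x \<in> g)"
    using gE unfolding in_E_def by blast
  define T where "T = trT M"
  have T: "tm2 T" using wf_trT[OF M] by (simp add: T_def)
  define a where "a = (2 + \<gamma>) / \<iota>"
  have a: "a > 0" using \<gamma> \<iota> unfolding a_def by simp
  define mm where "mm = (\<lambda>n::nat. nat \<lceil>a * log 2 (real n)\<rceil>)"
  define e where "e = real K * a"
  have e0: "e \<ge> 0" using a unfolding e_def by simp
  define c where "c = nat \<lceil>e\<rceil> + 1"
  have c1: "c \<ge> 1" unfolding c_def by simp
  have ce: "real c \<ge> e + 1" unfolding c_def by linarith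
  obtain K' where K': "\<forall>u x t. t \<le> cost c T u x t \<and> real (cost c T u x t) \<le> K' * (real t + 1) * log 2 (real t + 2)"
    using adm T unfolding admissible_def by blast
  have K'0: "K' \<ge> 0"
  proof -
    have "0 \<le> real (cost c T [] [] 0)" by simp
    also have "\<dots> \<le> K' * (real 0 + 1) * log 2 (real 0 + 2)" using K' by blast
    finally show ?thesis by simp
  qed
  define B :: real where "B = real K * 2 ^ K + 2"
  define LE where "LE = length (E T)"
  define \<phi> where "\<phi> = univ E chk cost c"
  have ev1: "eventually (\<lambda>n. real LE + 1 + a * log 2 (real n) \<le> real n) sequentially"
    by (rule evlog)
  have ev2: "eventually (\<lambda>n. K' * B * log 2 B + (K' * B * e) * log 2 (real n) \<le> real n) sequentially"
    by (rule evlog)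
  have ev3: "eventually (\<lambda>n. chk c T n \<le> n ^ c) sequentially"
    using adm T c1 unfolding admissible_def by blast
  have ev4: "eventually (\<lambda>n::nat. n \<ge> 2) sequentially" by (rule eventually_ge_at_top)
  have key: "real n powr (1 + \<gamma>) \<le> Sup ((\<lambda>f. real (the_enat (cx_circ n f)) / real (the_enat (cx \<phi> n f)))
                            ` {f. cx \<phi> n f < \<infinity>})"
    if n1: "real LE + 1 + a * log 2 (real n) \<le> real n"
      and n2: "K' * B * log 2 B + (K' * B * e) * log 2 (real n) \<le> real n"
      and n3: "chk c T n \<le> n ^ c" and n4: "n \<ge> 2" for n
  proof -
    define N where "N = real n"
    have N1: "N \<ge> 1" using n4 unfolding N_def by simp
    have lN: "log 2 N \<ge> 1" using n4 unfolding N_def by simp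
    define m where "m = mm n"
    have m_lo: "real m \<ge> a * log 2 N" unfolding m_def mm_def N_def by linarith
    have y0: "0 \<le> a * log 2 N" using a lN by simp
    have mr: "real m = of_int \<lceil>a * log 2 N\<rceil>" using y0 unfolding m_def mm_def N_def by simp
    have m_hi: "real m \<le> a * log 2 N + 1" unfolding mr by linarith
    have m1: "m \<ge> 1"
    proof -
      have "a * log 2 N > 0" using a lN by simp
      then show ?thesis using m_lo by linarith
    qed
    have mn: "m \<le> n" using m_hi n1 unfolding N_def by linarith
    define u where "u = replicate m True"
    define h where "h = E T @ u"
    define f where "f = (\<lambda>x::bool list. take m x \<in> g)"
    have U: "\<phi> h x = Some (f x)" if x: "length x = n" for x
    proof -
      define y where "y = take m x"
      have ly: "length y = m" using x mn unfolding y_def by simp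
      obtain t0 where t0: "t0 \<le> K * 2 ^ (K * m)" "halted M [y] t0" "cst (run M [y] t0) = qacc M \<longleftrightarrow> y \<in> g"
        using MK ly by metis
      have mx: "m \<le> length x" using x mn by simp
      have o1: "tm_out M [y] = Some (y \<in> g)" "halt_time M [y] \<le> t0" "halted M [y] (halt_time M [y])"
        using tm_out_E[OF t0(2) t0(3)] by auto
      have o2: "tm_out T [u, x] = tm_out M [y]" "halt_time T [u, x] = halt_time M [y]"
        using tm_out_eq[OF M mx] unfolding T_def u_def y_def by auto
      have hl: "\<exists>t. halted T [u, x] t"
        using o1(3) halted_iff[OF M mx] unfolding T_def u_def y_def by blast
      have t0r: "real t0 \<le> real K * 2 ^ K * N powr e"
      proof -
        have "real t0 \<le> real K * real (2 ^ (K * m))" using t0(1) by (metis of_nat_le_iff of_nat_mult)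
        also have "\<dots> \<le> real K * (2 ^ K * N powr (real K * a))"
          using pow_bound[OF N1 m_hi, of K] by (intro mult_left_mono) auto
        finally show ?thesis unfolding e_def by simp
      qed
      define ht where "ht = halt_time T [u, x]"
      have htt: "ht \<le> t0" using o1(2) o2(2) unfolding ht_def by simp
      have cb: "real (cost c T u x ht) \<le> K' * (real ht + 1) * log 2 (real ht + 2)" using K' by blast
      have "real (cost c T u x ht) \<le> N powr real c"
        by (rule cost_bound[OF N1 e0 K'0 t0r htt _ ce cb]) (use n2 in \<open>simp add: B_def N_def\<close>)
      also have "\<dots> = real (n ^ c)" using N1 unfolding N_def by (simp add: powr_realpow)
      finally have "cost c T u x ht \<le> n ^ c" by linarith
      then have "\<phi> h x = tm_out T [u, x]"
        unfolding \<phi>_def h_def using univ_eq[OF adm T _ hl] n3 x unfolding ht_def by simp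
      then show ?thesis using o1(1) o2(1) unfolding f_def y_def by simp
    qed
    have l2: "\<forall>h'. (\<forall>x. length x = n \<longrightarrow> \<phi> h' x = Some (f x)) \<longrightarrow> length h' \<ge> 2"
    proof (intro allI impI)
      fix h' assume "\<forall>x. length x = n \<longrightarrow> \<phi> h' x = Some (f x)"
      then have "\<phi> h' (replicate n False) \<noteq> None" by simp
      then show "length h' \<ge> 2" using univ_len[OF adm] unfolding \<phi>_def by blast
    qed
    have cxb: "cx \<phi> n f < \<infinity>" "2 \<le> the_enat (cx \<phi> n f)" "the_enat (cx \<phi> n f) \<le> length h"
      using cx_bounds[of n \<phi> h f, OF _ l2] U by auto
    have lh: "real (length h) \<le> N" using n1 m_hi unfolding h_def u_def LE_def N_def by simp
    have cl: "N powr (2 + \<gamma>) \<le> real (the_enat (cx_circ n f))"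
    proof (rule cxc_bound)
      show "n \<ge> 1" using n4 by simp
      show "\<forall>C. circ_computes n C f \<longrightarrow> N powr (2 + \<gamma>) \<le> real (length C)"
      proof (intro allI impI)
        fix C assume C: "circ_computes n C f"
        have "circ_computes m (map (rg m) C) (\<lambda>x. x \<in> g)"
          by (rule restrict_circ[OF C m1 mn]) (simp add: f_def)
        then have "2 powr (\<iota> * real m) \<le> real (length C)" using hardg m1 by fastforce
        moreover have "N powr (2 + \<gamma>) \<le> 2 powr (\<iota> * real m)"
          by (rule circ_pow[OF \<iota> N1]) (use m_lo in \<open>simp add: a_def\<close>)
        ultimately show "N powr (2 + \<gamma>) \<le> real (length C)" by linarith
      qed
    qed
    have "N powr (1 + \<gamma>) = N powr (2 + \<gamma>) / N" using N1 by (simp add: powr_add power2_eq_square field_simps)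
    also have "\<dots> \<le> N powr (2 + \<gamma>) / real (the_enat (cx \<phi> n f))"
      using cxb(2,3) lh by (intro divide_left_mono) auto
    also have "\<dots> \<le> real (the_enat (cx_circ n f)) / real (the_enat (cx \<phi> n f))"
      using cl by (intro divide_right_mono) auto
    also have "\<dots> \<le> Sup ((\<lambda>f. real (the_enat (cx_circ n f)) / real (the_enat (cx \<phi> n f))) ` {f. cx \<phi> n f < \<infinity>})"
      by (rule sup_ge[OF cxb(1)])
    finally show ?thesis unfolding N_def .
  qed
  have "eventually (\<lambda>n. 1 * norm (real n powr (1 + \<gamma>)) \<le> norm (Sup ((\<lambda>f. real (the_enat (cx_circ n f)) / real (the_enat (cx \<phi> n f)))
                            ` {f. cx \<phi> n f < \<infinity>}))) sequentially"
  proof (rule eventually_mono[OF eventually_conj[OF ev1 eventually_conj[OF ev2 eventually_conj[OF ev3 ev4]]]])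
    fix n assume "real LE + 1 + a * log 2 (real n) \<le> real n \<and> K' * B * log 2 B + K' * B * e * log 2 (real n) \<le> real n \<and> chk c T n \<le> n ^ c \<and> 2 \<le> n"
    then have k: "real n powr (1 + \<gamma>) \<le> Sup ((\<lambda>f. real (the_enat (cx_circ n f)) / real (the_enat (cx \<phi> n f))) ` {f. cx \<phi> n f < \<infinity>})"
      using key by blast
    then show "1 * norm (real n powr (1 + \<gamma>)) \<le> norm (Sup ((\<lambda>f. real (the_enat (cx_circ n f)) / real (the_enat (cx \<phi> n f))) ` {f. cx \<phi> n f < \<infinity>}))"
      by simp
  qed
  then have "(\<lambda>n::nat. Sup ((\<lambda>f. real (the_enat (cx_circ n f)) / real (the_enat (cx \<phi> n f))) ` {f. cx \<phi> n f < \<infinity>}))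
           \<in> \<Omega>(\<lambda>n. real n powr (1 + \<gamma>))"
    unfolding bigomega_def by (intro CollectI exI[of _ 1]) simp
  then show "\<exists>c::nat. c \<ge> 1 \<and>
           (\<lambda>n::nat. Sup ((\<lambda>f. real (the_enat (cx_circ n f)) / real (the_enat (cx (univ E chk cost c) n f)))
                            ` {f. cx (univ E chk cost c) n f < \<infinity>}))
           \<in> \<Omega>(\<lambda>n. real n powr (1 + \<gamma>))"
    using c1 unfolding \<phi>_def by blast
qed


end
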